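(* Let $A,B$ be disjoint sets of vertices of a graph $G$ and let $\mathcal{Q}$ be a collection of $k$ pairwise edge-disjoint $AB$-paths. Then the union of the members of $\mathcal{Q}$ contains a collection of $k$ pairwise edge-disjoint $AB$-paths which is aligned.
   Context: All graphs are finite and loopless but may have parallel edges. For disjoint $A,B\subseteq V(G)$, an $AB$-path is a path with one end in $A$ and the other end in $B$; it is written $x_1,x_2,\ldots,x_s$ with $x_1\in A$, $x_s\in B$. Two edge-disjoint $AB$-paths $Q_1=x_1,\ldots,x_s$ and $Q_2=y_1,\ldots,y_t$ which share two internal vertices $u=x_{i_1}=y_{j_1}$ and $v=x_{i_2}=y_{j_2}$ are aligned with respect to $u$ and $v$ if $(i_1-i_2)(j_1-j_2)>0$. Two such paths are aligned if they are aligned with respect to every pair of internal vertices in which they intersect; a collection of paths is aligned if its members are pairwise aligned. *)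

theory Defs
  imports Main
begin

definition multigraph :: "'v set \<Rightarrow> 'e set \<Rightarrow> ('e \<Rightarrow> 'v set) \<Rightarrow> bool" where
  "multigraph V E ends \<longleftrightarrow> finite V \<and> finite E \<and>
     (\<forall>e\<in>E. ends e \<subseteq> V \<and> card (ends e) = 2)"

text \<open>A path is a pair (xs, es): vertex sequence x_1..x_s (distinct) and the edges
  e_i joining x_i and x_(i+1).\<close>
type_synonym ('v,'e) path = "'v list \<times> 'e list"

definition is_path :: "'v set \<Rightarrow> 'e set \<Rightarrow> ('e \<Rightarrow> 'v set) \<Rightarrow> ('v,'e) path \<Rightarrow> bool" where
  "is_path V E ends P \<longleftrightarrow>
     (let xs = fst P; es = snd P in
        length xs = Suc (length es) \<and> distinct xs \<and> distinct es \<and> set xs \<subseteq> V \<and>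
        (\<forall>i < length es. es ! i \<in> E \<and> ends (es ! i) = {xs ! i, xs ! Suc i}))"

definition is_AB_path :: "'v set \<Rightarrow> 'e set \<Rightarrow> ('e \<Rightarrow> 'v set) \<Rightarrow> 'v set \<Rightarrow> 'v set \<Rightarrow> ('v,'e) path \<Rightarrow> bool" where
  "is_AB_path V E ends A B P \<longleftrightarrow>
     is_path V E ends P \<and> hd (fst P) \<in> A \<and> last (fst P) \<in> B"

definition edge_disjoint :: "('v,'e) path \<Rightarrow> ('v,'e) path \<Rightarrow> bool" where
  "edge_disjoint P Q \<longleftrightarrow> set (snd P) \<inter> set (snd Q) = {}"

text \<open>Internal positions of a path with s vertices are 1..s-2 (0-based).\<close>
definition internal_index :: "('v,'e) path \<Rightarrow> nat \<Rightarrow> bool" where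
  "internal_index P i \<longleftrightarrow> 0 < i \<and> Suc i < length (fst P)"

definition aligned :: "('v,'e) path \<Rightarrow> ('v,'e) path \<Rightarrow> bool" where
  "aligned P Q \<longleftrightarrow>
     (\<forall>i1 i2 j1 j2. internal_index P i1 \<and> internal_index P i2 \<and>
        internal_index Q j1 \<and> internal_index Q j2 \<and>
        fst P ! i1 = fst Q ! j1 \<and> fst P ! i2 = fst Q ! j2 \<and>
        fst P ! i1 \<noteq> fst P ! i2 \<longrightarrow>
        (int i1 - int i2) * (int j1 - int j2) > 0)"

end

theory Submission
  imports Defs
begin
(* aligned edge-disjoint paths via minimal total length *)

fun walk :: "'e set \<Rightarrow> ('e \<Rightarrow> 'v set) \<Rightarrow> 'v list \<Rightarrow> 'e list \<Rightarrow> bool" where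
  "walk E ends [x] [] = True"
| "walk E ends (x#y#xs) (e#es) = (e \<in> E \<and> ends e = {x,y} \<and> walk E ends (y#xs) es)"
| "walk E ends _ _ = False"

lemma walk_iff: "walk E ends xs es \<longleftrightarrow> length xs = Suc (length es) \<and>
   (\<forall>i<length es. es!i \<in> E \<and> ends (es!i) = {xs!i, xs!Suc i})"
  by (induction E ends xs es rule: walk.induct) (auto simp: All_less_Suc2)

lemma walk_Cons: "walk E ends (x#xs) (e#es) \<longleftrightarrow> xs \<noteq> [] \<and> e \<in> E \<and> ends e = {x, hd xs} \<and> walk E ends xs es"
  by (cases xs) auto

lemma walk_Nil2: "walk E ends (x#xs) [] \<longleftrightarrow> xs = []"
  by (cases xs) auto

lemma walk_app: "walk E ends (as@[x]) es1 \<Longrightarrow> walk E ends (x#bs) es2 \<Longrightarrow> walk E ends (as@x#bs) (es1@es2)"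
proof (induction as arbitrary: es1)
  case Nil
  then show ?case by (cases es1) (auto simp: walk_Cons)
next
  case (Cons a as)
  then show ?case by (cases es1) (auto simp: walk_Cons walk_Nil2 hd_append)
qed

lemma walk_take: "walk E ends xs es \<Longrightarrow> i \<le> length es \<Longrightarrow> walk E ends (take (Suc i) xs) (take i es)"
  by (auto simp: walk_iff)

lemma walk_drop: "walk E ends xs es \<Longrightarrow> i \<le> length es \<Longrightarrow> walk E ends (drop i xs) (drop i es)"
  by (auto simp: walk_iff)

lemma walk_splice:
  assumes "walk E ends xs es" "walk E ends ys fs" "i < length xs" "j < length ys" "xs!i = ys!j"
  shows "walk E ends (take (Suc i) xs @ drop (Suc j) ys) (take i es @ drop j fs)"
proof -
  have l: "length xs = Suc (length es)" "length ys = Suc (length fs)" using assms by (auto simp: walk_iff)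
  have "walk E ends (take i xs @ [xs!i]) (take i es)"
    using walk_take[OF assms(1), of i] assms l by (simp add: take_Suc_conv_app_nth)
  moreover have "walk E ends (ys!j # drop (Suc j) ys) (drop j fs)"
    using walk_drop[OF assms(2), of j] assms l by (simp add: Cons_nth_drop_Suc)
  ultimately have "walk E ends (take i xs @ ys!j # drop (Suc j) ys) (take i es @ drop j fs)"
    using assms(5) walk_app by metis
  then show ?thesis using assms by (simp add: take_Suc_conv_app_nth)
qed

lemma last_splice:
  assumes "i < length xs" "j < length ys" "xs!i = ys!j"
  shows "last (take (Suc i) xs @ drop (Suc j) ys) = last ys"
proof (cases "Suc j < length ys")
  case True then show ?thesis by simp
next
  case False
  then have "j = length ys - 1" using assms by simp
  moreover have "ys \<noteq> []" using assms by auto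
  ultimately show ?thesis using assms by (simp add: last_conv_nth[of ys] take_Suc_conv_app_nth)
qed

lemma hd_splice: "xs \<noteq> [] \<Longrightarrow> hd (take (Suc i) xs @ zs) = hd xs"
  by (cases xs) auto

lemma shortcut:
  "walk E ends xs es \<Longrightarrow> distinct es \<Longrightarrow> \<exists>ys fs. walk E ends ys fs \<and> distinct ys \<and> distinct fs \<and>
     hd ys = hd xs \<and> last ys = last xs \<and> set ys \<subseteq> set xs \<and> set fs \<subseteq> set es \<and> length fs \<le> length es"
proof (induction "length xs" arbitrary: xs es rule: less_induct)
  case less
  show ?case
  proof (cases "distinct xs")
    case True then show ?thesis using less.prems by blast
  next
    case False
    then obtain i j where ij: "i < j" "j < length xs" "xs!i = xs!j"
      by (metis distinct_conv_nth linorder_neqE_nat)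
    have l: "length xs = Suc (length es)" using less.prems by (auto simp: walk_iff)
    define xs' where "xs' = take (Suc i) xs @ drop (Suc j) xs"
    define es' where "es' = take i es @ drop j es"
    have w: "walk E ends xs' es'" unfolding xs'_def es'_def
      using walk_splice[OF less.prems(1) less.prems(1)] ij by simp
    have d: "distinct es'" unfolding es'_def using less.prems(2) ij
      by (simp add: set_take_disj_set_drop_if_distinct)
    have len: "length xs' < length xs" unfolding xs'_def using ij by simp
    from less.hyps[OF len w d] obtain ys fs where
      r: "walk E ends ys fs \<and> distinct ys \<and> distinct fs \<and>
     hd ys = hd xs' \<and> last ys = last xs' \<and> set ys \<subseteq> set xs' \<and> set fs \<subseteq> set es' \<and> length fs \<le> length es'"
      by blast
    have "xs \<noteq> []" using ij by auto
    have "hd xs' = hd xs" unfolding xs'_def using \<open>xs \<noteq> []\<close> by (rule hd_splice)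
    moreover have "last xs' = last xs" unfolding xs'_def using ij by (intro last_splice) auto
    moreover have "set xs' \<subseteq> set xs" unfolding xs'_def by (auto dest: in_set_takeD in_set_dropD)
    moreover have "set es' \<subseteq> set es" unfolding es'_def by (auto dest: in_set_takeD in_set_dropD)
    moreover have "length es' \<le> length es" unfolding es'_def using ij l by simp
    ultimately show ?thesis using r by (metis order_trans)
  qed
qed


lemma path_walk: "is_path V E ends P \<longleftrightarrow> walk E ends (fst P) (snd P) \<and> distinct (fst P) \<and> distinct (snd P) \<and> set (fst P) \<subseteq> V"
  by (auto simp: is_path_def walk_iff Let_def)

lemma walk_set: "walk E ends xs es \<Longrightarrow> set es \<subseteq> E"
  by (auto simp: walk_iff in_set_conv_nth)

lemma walk_ne: "walk E ends xs es \<Longrightarrow> xs \<noteq> []"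
  by (auto simp: walk_iff)

lemma half:
  assumes P: "is_AB_path V E ends A B (xs,es)" and Q: "is_AB_path V E ends A B (ys,fs)"
    and dis: "set es \<inter> set fs = {}"
    and "a < length xs" "d < length ys" "xs!a = ys!d"
  shows "\<exists>P'. is_AB_path V E ends A B P' \<and> set (snd P') \<subseteq> set (take a es) \<union> set (drop d fs)
     \<and> length (snd P') \<le> a + (length fs - d)"
proof -
  have wP: "walk E ends xs es" "distinct es" "set xs \<subseteq> V" "hd xs \<in> A" using P by (auto simp: is_AB_path_def path_walk)
  have wQ: "walk E ends ys fs" "distinct fs" "set ys \<subseteq> V" "last ys \<in> B" using Q by (auto simp: is_AB_path_def path_walk)
  have l: "length xs = Suc (length es)" "length ys = Suc (length fs)" using wP wQ by (auto simp: walk_iff)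
  define ws where "ws = take (Suc a) xs @ drop (Suc d) ys"
  define gs where "gs = take a es @ drop d fs"
  have w: "walk E ends ws gs" unfolding ws_def gs_def using walk_splice[OF wP(1) wQ(1)] assms by simp
  have dg: "distinct gs" unfolding gs_def using wP(2) wQ(2) dis
    by (auto dest: in_set_takeD in_set_dropD)
  from shortcut[OF w dg] obtain zs hs where r: "walk E ends zs hs" "distinct zs" "distinct hs"
     "hd zs = hd ws" "last zs = last ws" "set zs \<subseteq> set ws" "set hs \<subseteq> set gs" "length hs \<le> length gs" by blast
  have "hd ws = hd xs" unfolding ws_def using walk_ne[OF wP(1)] by (rule hd_splice)
  moreover have "last ws = last ys" unfolding ws_def using assms by (intro last_splice) auto
  moreover have "set ws \<subseteq> V" unfolding ws_def using wP(3) wQ(3) by (auto dest: in_set_takeD in_set_dropD)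
  moreover have "length gs = min a (length es) + (length fs - d)" unfolding gs_def by simp
  ultimately show ?thesis using r wP wQ
    by (intro exI[of _ "(zs,hs)"]) (auto simp: is_AB_path_def path_walk gs_def)
qed

lemma cross:
  assumes P: "is_AB_path V E ends A B (xs,es)" and Q: "is_AB_path V E ends A B (ys,fs)"
    and dis: "set es \<inter> set fs = {}"
    and ab: "a < b" "b < length xs" and cd: "c < d" "d < length ys" and eq: "xs!a = ys!d" "xs!b = ys!c"
  shows "\<exists>P' Q'. is_AB_path V E ends A B P' \<and> is_AB_path V E ends A B Q' \<and>
     set (snd P') \<union> set (snd Q') \<subseteq> set es \<union> set fs \<and> set (snd P') \<inter> set (snd Q') = {} \<and>
     length (snd P') + length (snd Q') < length es + length fs"
proof -
  have wP: "distinct es" "length xs = Suc (length es)" using P by (auto simp: is_AB_path_def path_walk walk_iff)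
  have wQ: "distinct fs" "length ys = Suc (length fs)" using Q by (auto simp: is_AB_path_def path_walk walk_iff)
  have a_l: "a < length xs" and c_l: "c < length ys" using ab cd by auto
  have dis': "set fs \<inter> set es = {}" using dis by blast
  have eq': "ys!c = xs!b" using eq by simp
  obtain P' where p: "is_AB_path V E ends A B P'" "set (snd P') \<subseteq> set (take a es) \<union> set (drop d fs)"
     "length (snd P') \<le> a + (length fs - d)"
    using half[OF P Q dis a_l cd(2) eq(1)] by blast
  obtain Q' where q: "is_AB_path V E ends A B Q'" "set (snd Q') \<subseteq> set (take c fs) \<union> set (drop b es)"
     "length (snd Q') \<le> c + (length es - b)"
    using half[OF Q P dis' c_l ab(2) eq'] by blast
  have d1: "set (take a es) \<inter> set (drop b es) = {}" using wP ab by (simp add: set_take_disj_set_drop_if_distinct)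
  have d2: "set (take c fs) \<inter> set (drop d fs) = {}" using wQ cd by (simp add: set_take_disj_set_drop_if_distinct)
  have e1: "set (take a es) \<inter> set (take c fs) = {}" using dis by (auto dest: in_set_takeD)
  have e2: "set (drop d fs) \<inter> set (drop b es) = {}" using dis by (auto dest: in_set_dropD)
  have "set (snd P') \<inter> set (snd Q') = {}"
  proof -
    have False if "x \<in> set (snd P')" "x \<in> set (snd Q')" for x
    proof -
    from that have "x \<in> set (take a es) \<union> set (drop d fs)" "x \<in> set (take c fs) \<union> set (drop b es)"
      using p(2) q(2) by auto
    then show False using d1 d2 e1 e2 by auto
    qed
    then show ?thesis by blast
  qed
  moreover have "set (snd P') \<union> set (snd Q') \<subseteq> set es \<union> set fs" using p(2) q(2)
    by (auto dest: in_set_takeD in_set_dropD)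
  moreover have "length (snd P') + length (snd Q') < length es + length fs"
    using p(3) q(3) ab cd wP wQ by linarith
  ultimately show ?thesis using p q by blast
qed

theorem lemma7p1:
  fixes V :: "'v set" and E :: "'e set" and ends :: "'e \<Rightarrow> 'v set"
    and A B :: "'v set" and k :: nat and Q :: "nat \<Rightarrow> ('v,'e) path"
  assumes "multigraph V E ends"
    and "A \<subseteq> V" and "B \<subseteq> V" and "A \<inter> B = {}"
    and "\<forall>i<k. is_AB_path V E ends A B (Q i)"
    and "\<forall>i<k. \<forall>j<k. i \<noteq> j \<longrightarrow> edge_disjoint (Q i) (Q j)"
  shows "\<exists>R :: nat \<Rightarrow> ('v,'e) path.
           (\<forall>i<k. is_AB_path (\<Union>j<k. set (fst (Q j))) (\<Union>j<k. set (snd (Q j))) ends A B (R i)) \<and>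
           (\<forall>i<k. \<forall>j<k. i \<noteq> j \<longrightarrow> edge_disjoint (R i) (R j)) \<and>
           (\<forall>i<k. \<forall>j<k. i \<noteq> j \<longrightarrow> aligned (R i) (R j))"
proof -
  define V' where "V' = (\<Union>j<k. set (fst (Q j)))"
  define E' where "E' = (\<Union>j<k. set (snd (Q j)))"
  define good where "good R \<longleftrightarrow> (\<forall>i<k. is_AB_path V' E' ends A B (R i)) \<and>
           (\<forall>i<k. \<forall>j<k. i \<noteq> j \<longrightarrow> edge_disjoint (R i) (R j))" for R :: "nat \<Rightarrow> ('v,'e) path"
  define m where "m R = (\<Sum>i<k. length (snd (R i)))" for R :: "nat \<Rightarrow> ('v,'e) path"
  have "good Q"
    unfolding good_def
  proof (intro conjI allI impI)
    fix i assume i: "i < k"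
    then have "is_AB_path V E ends A B (Q i)" using assms(5) by blast
    then show "is_AB_path V' E' ends A B (Q i)" using i
      unfolding is_AB_path_def is_path_def Let_def V'_def E'_def by (auto intro: nth_mem)
  qed (use assms(6) in blast)
  then obtain R where gR: "good R" and minR: "\<And>R'. good R' \<Longrightarrow> m R \<le> m R'"
    using ex_has_least_nat[of good Q m] by blast
  have al: "aligned (R i) (R j)" if ij: "i < k" "j < k" "i \<noteq> j" for i j
  proof (rule ccontr)
    assume "\<not> aligned (R i) (R j)"
    then obtain i1 i2 j1 j2 where h: "internal_index (R i) i1" "internal_index (R i) i2"
        "internal_index (R j) j1" "internal_index (R j) j2"
        "fst (R i) ! i1 = fst (R j) ! j1" "fst (R i) ! i2 = fst (R j) ! j2"
        "fst (R i) ! i1 \<noteq> fst (R i) ! i2" "(int i1 - int i2) * (int j1 - int j2) \<le> 0"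
      unfolding aligned_def by (auto simp: not_less)
    obtain xs es where Ri: "R i = (xs,es)" by fastforce
    obtain ys fs where Rj: "R j = (ys,fs)" by fastforce
    have Pi: "is_AB_path V' E' ends A B (xs,es)" using gR ij Ri by (auto simp: good_def)
    have Pj: "is_AB_path V' E' ends A B (ys,fs)" using gR ij Rj by (auto simp: good_def)
    have "edge_disjoint (R i) (R j)" using gR ij by (simp add: good_def)
    then have dis: "set es \<inter> set fs = {}" using Ri Rj by (simp add: edge_disjoint_def)
    have "i1 \<noteq> i2" using h(7) by auto
    have "j1 \<noteq> j2" using h(5-7) by auto
    have bnd: "i1 < length xs" "i2 < length xs" "j1 < length ys" "j2 < length ys"
      using h(1-4) Ri Rj by (auto simp: internal_index_def)
    have "(i1 < i2 \<and> j2 < j1) \<or> (i2 < i1 \<and> j1 < j2)"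
    proof (rule ccontr)
      assume "\<not> ?thesis"
      then have "(i1 < i2 \<and> j1 < j2) \<or> (i2 < i1 \<and> j2 < j1)" using \<open>i1 \<noteq> i2\<close> \<open>j1 \<noteq> j2\<close> by auto
      then have "(int i1 - int i2) * (int j1 - int j2) > 0" by (auto simp: mult_neg_neg)
      then show False using h(8) by simp
    qed
    have hx: "xs!i1 = ys!j1" "xs!i2 = ys!j2" using h(5,6) Ri Rj by auto
    have ex: "\<exists>P' Q'. is_AB_path V' E' ends A B P' \<and> is_AB_path V' E' ends A B Q' \<and>
     set (snd P') \<union> set (snd Q') \<subseteq> set es \<union> set fs \<and> set (snd P') \<inter> set (snd Q') = {} \<and>
     length (snd P') + length (snd Q') < length es + length fs"
      using \<open>(i1 < i2 \<and> j2 < j1) \<or> (i2 < i1 \<and> j1 < j2)\<close>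
    proof
      assume c: "i1 < i2 \<and> j2 < j1"
      then have c1: "i1 < i2" and c2: "j2 < j1" by auto
      show ?thesis by (rule cross[OF Pi Pj dis c1 bnd(2) c2 bnd(3) hx(1) hx(2)])
    next
      assume c: "i2 < i1 \<and> j1 < j2"
      then have c1: "i2 < i1" and c2: "j1 < j2" by auto
      show ?thesis by (rule cross[OF Pi Pj dis c1 bnd(1) c2 bnd(4) hx(2) hx(1)])
    qed
    then obtain P' Q' where pq: "is_AB_path V' E' ends A B P'" "is_AB_path V' E' ends A B Q'"
     "set (snd P') \<union> set (snd Q') \<subseteq> set es \<union> set fs" "set (snd P') \<inter> set (snd Q') = {}"
     "length (snd P') + length (snd Q') < length es + length fs"
      by blast
    define R' where "R' = R(i := P', j := Q')"
    have "good R'"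
      unfolding good_def
    proof (intro conjI allI impI)
      fix l assume "l < k"
      have "R' l = (if l = j then Q' else if l = i then P' else R l)" by (simp add: R'_def)
      then show "is_AB_path V' E' ends A B (R' l)" using gR pq \<open>l < k\<close> unfolding good_def by simp
    next
      fix l l' assume l: "l < k" "l' < k" "l \<noteq> l'"
      have sub: "set (snd (R' l)) \<subseteq> set (snd (R l)) \<union> (if l = i \<or> l = j then set (snd (R i)) \<union> set (snd (R j)) else {})" for l
        using pq(3) Ri Rj unfolding R'_def by auto
      have dRl: "\<And>a b. a < k \<Longrightarrow> b < k \<Longrightarrow> a \<noteq> b \<Longrightarrow> set (snd (R a)) \<inter> set (snd (R b)) = {}"
        using gR by (auto simp: good_def edge_disjoint_def)
      have esi: "set es = set (snd (R i))" "set fs = set (snd (R j))" using Ri Rj by auto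
      have sub2: "l \<in> {i,j} \<Longrightarrow> set (snd (R' l)) \<subseteq> set (snd (R i)) \<union> set (snd (R j))" for l
        using sub[of l] by auto
      have same: "l \<notin> {i,j} \<Longrightarrow> R' l = R l" for l unfolding R'_def by simp
      show "edge_disjoint (R' l) (R' l')"
        unfolding edge_disjoint_def
      proof (cases "l \<in> {i,j}"; cases "l' \<in> {i,j}")
        assume "l \<in> {i,j}" "l' \<in> {i,j}"
        then have "(l = i \<and> l' = j) \<or> (l = j \<and> l' = i)" using l by auto
        then show "set (snd (R' l)) \<inter> set (snd (R' l')) = {}" using pq(4) ij unfolding R'_def by auto
      next
        assume a1: "l \<in> {i,j}" "l' \<notin> {i,j}"
        have "set (snd (R l')) \<inter> set (snd (R i)) = {}" "set (snd (R l')) \<inter> set (snd (R j)) = {}"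
          using dRl[of l' i] dRl[of l' j] l ij a1 by auto
        moreover have "set (snd (R' l')) \<subseteq> set (snd (R l'))" using same[OF a1(2)] by simp
        ultimately show "set (snd (R' l)) \<inter> set (snd (R' l')) = {}" using sub2[OF a1(1)] by blast
      next
        assume a1: "l \<notin> {i,j}" "l' \<in> {i,j}"
        have "set (snd (R l)) \<inter> set (snd (R i)) = {}" "set (snd (R l)) \<inter> set (snd (R j)) = {}"
          using dRl[of l i] dRl[of l j] l ij a1 by auto
        moreover have "set (snd (R' l)) \<subseteq> set (snd (R l))" using same[OF a1(1)] by simp
        ultimately show "set (snd (R' l)) \<inter> set (snd (R' l')) = {}" using sub2[OF a1(2)] by blast
      next
        assume a1: "l \<notin> {i,j}" "l' \<notin> {i,j}"
        then show "set (snd (R' l)) \<inter> set (snd (R' l')) = {}" using same[OF a1(1)] same[OF a1(2)] dRl[of l l'] l by simp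
      qed
    qed
    have split: "m S = length (snd (S i)) + length (snd (S j)) + (\<Sum>l\<in>{..<k} - {i} - {j}. length (snd (S l)))"
      for S
    proof -
      have "m S = length (snd (S i)) + (\<Sum>l\<in>{..<k} - {i}. length (snd (S l)))"
        unfolding m_def using ij by (simp add: sum.remove)
      also have "(\<Sum>l\<in>{..<k} - {i}. length (snd (S l))) = length (snd (S j)) + (\<Sum>l\<in>{..<k} - {i} - {j}. length (snd (S l)))"
        using ij by (subst sum.remove[of _ j]) auto
      finally show ?thesis by simp
    qed
    have "(\<Sum>l\<in>{..<k} - {i} - {j}. length (snd (R' l))) = (\<Sum>l\<in>{..<k} - {i} - {j}. length (snd (R l)))"
      unfolding R'_def by (rule sum.cong) auto
    moreover have "R' i = P'" "R' j = Q'" using ij by (auto simp: R'_def)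
    ultimately have "m R' < m R" using split[of R'] split[of R] pq(5) Ri Rj by simp
    with minR[OF \<open>good R'\<close>] show False by simp
  qed
  show ?thesis
    using gR al unfolding good_def V'_def E'_def by blast
qed

end
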